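(* Let $h(p):=-s_\phi(p,p)$, $C:=\mathbb{E}[Q\mid S]$, $\mathrm{GL}(S):=\mathbb{E}[d_\phi(C,Q)]$, let $S_B$ be a binned version of $S$, and let $\mathscr{R}:\mathcal{X}\to\mathbb{N}$ be a partition of the feature space (write $\mathscr{R}$ for $\mathscr{R}(X)$). Define $\mathrm{GL}_{\mathrm{explained}}(S_B):=\mathbb{E}[\mathrm{Var}_h(\mathbb{E}[Q\mid S_B,\mathscr{R}]\mid S_B)]$, $\mathrm{GL}_{\mathrm{residual}}(S_B):=\mathbb{E}[\mathrm{Var}_h(Q\mid S_B,\mathscr{R})]$ and $\mathrm{GL}_{\mathrm{induced}}(S,S_B):=\mathbb{E}[\mathrm{Var}_h(C\mid S_B)]$. Then $$\mathrm{GL}(S)=\mathrm{GL}_{\mathrm{explained}}(S_B)-\mathrm{GL}_{\mathrm{induced}}(S,S_B)+\mathrm{GL}_{\mathrm{residual}}(S_B).$$ If the scoring rule is proper, then $\mathrm{GL}(S)\ge \mathrm{GL}_{\mathrm{explained}}(S_B)-\mathrm{GL}_{\mathrm{induced}}(S,S_B)$.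
   Context: Let $(X,Y)$ be jointly distributed with $X\in\mathcal{X}$ and $Y\in\{e_1,\dots,e_K\}$ (one-hot vectors of $\mathbb{R}^K$); $\Delta_K$ is the probability simplex; $Q\in\Delta_K$ with $Q_k:=P(Y=e_k\mid X)$; $S=f(X)\in\Delta_K$ for a classifier $f$. A scoring rule is $\phi:\Delta_K\times\{e_1,\dots,e_K\}\to\mathbb{R}$, with $s_\phi(P,q):=\sum_k\phi(P,e_k)q_k$ and $d_\phi(P,q):=s_\phi(P,q)-s_\phi(q,q)$; $\phi$ is proper if $d_\phi\ge0$. For $f:\mathbb{R}^d\to\mathbb{R}$, $\mathrm{Var}_f(U\mid V):=\mathbb{E}[f(U)\mid V]-f(\mathbb{E}[U\mid V])$. Binned classifier: given a partition $\{\mathcal{B}_j\}_{1\le j\le J}$ of $\Delta_K$, $S_B$ equals $\mathbb{E}[S\mid S\in\mathcal{B}_j]$ on $\{S\in\mathcal{B}_j\}$. All required expectations are assumed to exist. *)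

theory Defs
  imports "HOL-Probability.Probability"
begin

text \<open>Vectors of R^K are modelled as real^'k with 'k a finite index type (K = CARD('k)).
  The one-hot vector e_k is axis k 1.  A scoring rule phi(P, e_k) is modelled as
  phi P k.\<close>

definition prob_simplex :: "(real^'k) set" where
  "prob_simplex = {p. (\<forall>i. 0 \<le> p $ i) \<and> (\<Sum>i\<in>UNIV. p $ i) = 1}"

definition s_phi :: "(real^'k \<Rightarrow> 'k \<Rightarrow> real) \<Rightarrow> real^'k \<Rightarrow> real^'k \<Rightarrow> real" where
  "s_phi phi P q = (\<Sum>k\<in>UNIV. phi P k * q $ k)"

definition d_phi :: "(real^'k \<Rightarrow> 'k \<Rightarrow> real) \<Rightarrow> real^'k \<Rightarrow> real^'k \<Rightarrow> real" where
  "d_phi phi P q = s_phi phi P q - s_phi phi q q"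

definition proper_rule :: "(real^'k \<Rightarrow> 'k \<Rightarrow> real) \<Rightarrow> bool" where
  "proper_rule phi = (\<forall>P\<in>prob_simplex. \<forall>q\<in>prob_simplex. 0 \<le> d_phi phi P q)"

definition cond_exp_vec :: "'a measure \<Rightarrow> 'a measure \<Rightarrow> ('a \<Rightarrow> real^'k) \<Rightarrow> 'a \<Rightarrow> real^'k" where
  "cond_exp_vec M F U = (\<lambda>\<omega>. \<chi> i. real_cond_exp M F (\<lambda>w. U w $ i) \<omega>)"

definition Var_cond :: "'a measure \<Rightarrow> 'a measure \<Rightarrow> (real^'k \<Rightarrow> real) \<Rightarrow> ('a \<Rightarrow> real^'k) \<Rightarrow> 'a \<Rightarrow> real" where
  "Var_cond M F h U = (\<lambda>\<omega>. real_cond_exp M F (\<lambda>w. h (U w)) \<omega> - h (cond_exp_vec M F U \<omega>))"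

text \<open>Binned classifier: the partition of the prob_simplex is given by the cell-index map bin;
  on the event that S lies in cell j, S_B equals E[S | S in cell j] (elementary
  conditional expectation).\<close>
definition binned :: "'a measure \<Rightarrow> (real^'k \<Rightarrow> nat) \<Rightarrow> ('a \<Rightarrow> real^'k) \<Rightarrow> 'a \<Rightarrow> real^'k" where
  "binned M bin S \<omega> =
     (\<chi> i. (\<integral>w. S w $ i * indicator {w\<in>space M. bin (S w) = bin (S \<omega>)} w \<partial>M)
            / measure M {w\<in>space M. bin (S w) = bin (S \<omega>)})"

end

theory Submission
  imports Defs
begin


lemma vec_meas:
  fixes U :: "'a \<Rightarrow> real^'k::finite"
  shows "U \<in> borel_measurable N \<longleftrightarrow> (\<forall>i. (\<lambda>x. U x $ i) \<in> borel_measurable N)"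
proof
  assume U: "U \<in> borel_measurable N"
  show "\<forall>i. (\<lambda>x. U x $ i) \<in> borel_measurable N"
  proof
    fix i
    have "(\<lambda>x. U x \<bullet> axis i 1) \<in> borel_measurable N" by (rule borel_measurable_inner[OF U borel_measurable_const])
    then show "(\<lambda>x. U x $ i) \<in> borel_measurable N" unfolding cart_eq_inner_axis[symmetric] .
  qed
next
  assume c: "\<forall>i. (\<lambda>x. U x $ i) \<in> borel_measurable N"
  show "U \<in> borel_measurable N"
  proof (rule borel_measurable_euclidean_space[THEN iffD2], rule ballI)
    fix b :: "real^'k" assume "b \<in> Basis"
    then obtain i where b: "b = axis i 1" unfolding Basis_vec_def by (auto simp: Basis_real_def)
    show "(\<lambda>x. U x \<bullet> b) \<in> borel_measurable N"
      using c unfolding b cart_eq_inner_axis[symmetric] by blast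
  qed
qed

lemma AE_vec:
  fixes P :: "'k::finite \<Rightarrow> 'a \<Rightarrow> bool"
  shows "(\<forall>i. AE x in M. P i x) \<Longrightarrow> AE x in M. \<forall>i. P i x"
  using AE_all_countable by blast

lemma sfs:
  assumes "prob_space M" "subalgebra M F"
  shows "sigma_finite_subalgebra M F"
proof -
  interpret prob_space M by fact
  have "finite_measure_subalgebra M F"
    by (simp add: finite_measure_subalgebra_axioms_def finite_measure_subalgebra_def assms(2) finite_measure_axioms)
  then show ?thesis by (rule finite_measure_subalgebra_is_sigma_finite)
qed

lemma cev_meas:
  fixes U :: "'a \<Rightarrow> real^'k::finite"
  shows "cond_exp_vec M F U \<in> borel_measurable F"
  unfolding vec_meas cond_exp_vec_def by simp

lemma cev_meas_M:
  fixes U :: "'a \<Rightarrow> real^'k::finite"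
  assumes "subalgebra M F"
  shows "cond_exp_vec M F U \<in> borel_measurable M"
  using measurable_from_subalg[OF assms cev_meas] .

lemma cev_comp_int:
  fixes U :: "'a \<Rightarrow> real^'k::finite"
  assumes "prob_space M" "subalgebra M F" "\<forall>i. integrable M (\<lambda>x. U x $ i)"
  shows "integrable M (\<lambda>x. cond_exp_vec M F U x $ i)"
proof -
  interpret sigma_finite_subalgebra M F using sfs assms by blast
  show ?thesis unfolding cond_exp_vec_def vec_lambda_beta using assms(3) real_cond_exp_int(1) by blast
qed

lemma tower_score:
  fixes U :: "'a \<Rightarrow> real^'k::finite"
  assumes "prob_space M" "subalgebra M F"
    and "\<forall>i. (\<lambda>x. U x $ i) \<in> borel_measurable M"
    and "\<forall>k. (\<lambda>p. phi p k) \<in> borel_measurable borel"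
    and "\<forall>k. integrable M (\<lambda>x. phi (cond_exp_vec M F U x) k * U x $ k)"
  shows "\<forall>k. integrable M (\<lambda>x. phi (cond_exp_vec M F U x) k * cond_exp_vec M F U x $ k)"
    "(\<integral>x. s_phi phi (cond_exp_vec M F U x) (U x) \<partial>M) = (\<integral>x. s_phi phi (cond_exp_vec M F U x) (cond_exp_vec M F U x) \<partial>M)"
proof -
  interpret sigma_finite_subalgebra M F using sfs assms by blast
  have m: "(\<lambda>x. phi (cond_exp_vec M F U x) k) \<in> borel_measurable F" for k
    using measurable_compose[OF cev_meas] assms(4) by blast
  have *: "integrable M (\<lambda>x. phi (cond_exp_vec M F U x) k * cond_exp_vec M F U x $ k)"
     "(\<integral>x. phi (cond_exp_vec M F U x) k * cond_exp_vec M F U x $ k \<partial>M) = (\<integral>x. phi (cond_exp_vec M F U x) k * U x $ k \<partial>M)" for k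
    using real_cond_exp_intg[where f="\<lambda>x. phi (cond_exp_vec M F U x) k" and g="\<lambda>x. U x $ k", OF _ m] assms(3,5) unfolding cond_exp_vec_def vec_lambda_beta
    by auto
  show "\<forall>k. integrable M (\<lambda>x. phi (cond_exp_vec M F U x) k * cond_exp_vec M F U x $ k)" using * by blast
  show "(\<integral>x. s_phi phi (cond_exp_vec M F U x) (U x) \<partial>M) = (\<integral>x. s_phi phi (cond_exp_vec M F U x) (cond_exp_vec M F U x) \<partial>M)"
    unfolding s_phi_def using * assms(5) by (simp add: Bochner_Integration.integral_sum)
qed

lemma var_int:
  fixes U :: "'a \<Rightarrow> real^'k::finite"
  assumes "prob_space M" "subalgebra M F"
    and "integrable M (\<lambda>x. h (U x))" "integrable M (\<lambda>x. h (cond_exp_vec M F U x))"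
  shows "(\<integral>x. Var_cond M F h U x \<partial>M) = (\<integral>x. h (U x) \<partial>M) - (\<integral>x. h (cond_exp_vec M F U x) \<partial>M)"
proof -
  interpret sigma_finite_subalgebra M F using sfs assms by blast
  show ?thesis unfolding Var_cond_def
    using assms(3,4) real_cond_exp_int[OF assms(3)]
    by (simp add: Bochner_Integration.integral_diff)
qed

lemma simplex_AE:
  fixes U :: "'a \<Rightarrow> real^'k::finite"
  assumes "prob_space M" "subalgebra M F"
    and "\<forall>i. (\<lambda>x. U x $ i) \<in> borel_measurable M"
    and "AE x in M. U x \<in> prob_simplex"
  shows "AE x in M. cond_exp_vec M F U x \<in> prob_simplex"
proof -
  interpret sigma_finite_subalgebra M F using sfs assms by blast
  interpret p: prob_space M by fact
  have b: "AE x in M. U x $ i \<in> {0..1}" for i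
    using assms(4)
  proof (eventually_elim)
    case (elim x)
    then have "U x $ i \<le> (\<Sum>j\<in>UNIV. U x $ j)"
      unfolding prob_simplex_def by (intro member_le_sum) auto
    then show ?case using elim unfolding prob_simplex_def by auto
  qed
  have int: "integrable M (\<lambda>x. U x $ i)" for i
  proof (rule p.integrable_const_bound[where B=1])
    show "AE x in M. norm (U x $ i) \<le> 1" using b[of i] by eventually_elim auto
  qed (use assms(3) in auto)
  have pos: "AE x in M. real_cond_exp M F (\<lambda>x. U x $ i) x \<ge> 0" for i
  proof -
    have m: "(\<lambda>x. U x $ i) \<in> borel_measurable M" using assms(3) by blast
    have a: "AE x in M. 0 \<le> U x $ i" using b[of i] by (rule eventually_mono) simp
    show ?thesis by (rule real_cond_exp_pos[OF a m])
  qed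
  have s1: "AE x in M. real_cond_exp M F (\<lambda>x. \<Sum>i\<in>UNIV. U x $ i) x = (\<Sum>i\<in>UNIV. real_cond_exp M F (\<lambda>x. U x $ i) x)"
    by (rule real_cond_exp_sum) (rule int)
  have sm: "(\<lambda>x. \<Sum>i\<in>UNIV. U x $ i) \<in> borel_measurable M"
    by (rule borel_measurable_sum) (use assms(3) in blast)
  have s2: "AE x in M. real_cond_exp M F (\<lambda>x. \<Sum>i\<in>UNIV. U x $ i) x = real_cond_exp M F (\<lambda>x. 1) x"
  proof (rule real_cond_exp_cong)
    show "AE x in M. (\<Sum>i\<in>UNIV. U x $ i) = 1" using assms(4) unfolding prob_simplex_def by (rule eventually_mono) simp
  qed (simp_all add: sm)
  have s3: "AE x in M. real_cond_exp M F (\<lambda>x. 1) x = 1"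
    by (rule real_cond_exp_F_meas) (simp_all add: p.integrable_const)
  have "AE x in M. \<forall>i. real_cond_exp M F (\<lambda>x. U x $ i) x \<ge> 0" using pos by (intro AE_vec) auto
  with s1 s2 s3 show ?thesis
  proof eventually_elim
    case (elim x)
    have "(\<Sum>i\<in>UNIV. cond_exp_vec M F U x $ i) = 1"
      unfolding cond_exp_vec_def vec_lambda_beta using elim(1,2,3) by linarith
    moreover have "\<forall>i. 0 \<le> cond_exp_vec M F U x $ i"
      unfolding cond_exp_vec_def vec_lambda_beta using elim(4) by blast
    ultimately show ?case unfolding prob_simplex_def by blast
  qed
qed


lemma simplex_int:
  fixes U :: "'a \<Rightarrow> real^'k::finite"
  assumes "prob_space M" "\<forall>i. (\<lambda>x. U x $ i) \<in> borel_measurable M"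
    and "AE x in M. U x \<in> prob_simplex"
  shows "integrable M (\<lambda>x. U x $ i)"
proof -
  interpret p: prob_space M by fact
  have b: "AE x in M. U x $ i \<in> {0..1}"
    using assms(3)
  proof (eventually_elim)
    case (elim x)
    then have "U x $ i \<le> (\<Sum>j\<in>UNIV. U x $ j)"
      unfolding prob_simplex_def by (intro member_le_sum) auto
    then show ?case using elim unfolding prob_simplex_def by auto
  qed
  show ?thesis
  proof (rule p.integrable_const_bound[where B=1])
    show "AE x in M. norm (U x $ i) \<le> 1" using b by eventually_elim auto
  qed (use assms(2) in blast)
qed

lemma tower_vec:
  fixes U :: "'a \<Rightarrow> real^'k::finite"
  assumes "prob_space M" "subalgebra M G" "subalgebra G F" "subalgebra M F"
    and "\<forall>i. integrable M (\<lambda>x. U x $ i)"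
  shows "AE x in M. cond_exp_vec M F (cond_exp_vec M G U) x = cond_exp_vec M F U x"
proof -
  interpret sigma_finite_subalgebra M F using sfs assms by blast
  have "AE x in M. \<forall>i. real_cond_exp M F (\<lambda>w. real_cond_exp M G (\<lambda>w. U w $ i) w) x = real_cond_exp M F (\<lambda>w. U w $ i) x"
  proof (rule AE_vec, rule allI)
    fix i
    show "AE x in M. real_cond_exp M F (\<lambda>w. real_cond_exp M G (\<lambda>w. U w $ i) w) x = real_cond_exp M F (\<lambda>w. U w $ i) x"
      using real_cond_exp_nested_subalg[OF assms(2,3), of "\<lambda>w. U w $ i"] assms(5) by simp
  qed
  then show ?thesis
    by (rule eventually_mono) (simp add: cond_exp_vec_def vec_eq_iff)
qed

lemma axis_simplex: "axis k (1::real) \<in> prob_simplex"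
  by (simp add: prob_simplex_def axis_def)

lemma sub_vimage:
  assumes "g \<in> measurable N MM" "space N = space M" "sets N \<subseteq> sets M"
  shows "subalgebra N (vimage_algebra (space M) g MM)"
  using sets_image_in_sets[of N "space M" g MM] assms unfolding subalgebra_def by auto

theorem proposition2:
  fixes M :: "'a measure" and Mx :: "'x measure"
    and X :: "'a \<Rightarrow> 'x" and Y :: "'a \<Rightarrow> real^'k::finite"
    and f :: "'x \<Rightarrow> real^'k" and phi :: "real^'k \<Rightarrow> 'k \<Rightarrow> real"
    and bin :: "real^'k \<Rightarrow> nat" and J :: nat and R :: "'x \<Rightarrow> nat"
  assumes "prob_space M"
    and "X \<in> measurable M Mx"
    and "Y \<in> borel_measurable M" and "\<forall>\<omega>\<in>space M. \<exists>k. Y \<omega> = axis k 1"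
    and "f \<in> borel_measurable Mx" and "\<forall>x\<in>space Mx. f x \<in> prob_simplex"
    and "\<forall>k. (\<lambda>p. phi p k) \<in> borel_measurable borel"
    and "bin \<in> measurable borel (count_space UNIV)" and "\<forall>p\<in>prob_simplex. bin p \<in> {1..J}"
    and "R \<in> measurable Mx (count_space UNIV)"
  defines "h \<equiv> (\<lambda>p. - s_phi phi p p)"
    defines "S \<equiv> (\<lambda>\<omega>. f (X \<omega>))"
    defines "Q \<equiv> cond_exp_vec M (vimage_algebra (space M) X Mx) Y"
    defines "C \<equiv> cond_exp_vec M (vimage_algebra (space M) S borel) Q"
    defines "SB \<equiv> binned M bin S"
    defines "FB \<equiv> vimage_algebra (space M) SB borel"
    defines "FBR \<equiv> vimage_algebra (space M) (\<lambda>\<omega>. (SB \<omega>, R (X \<omega>))) (borel \<Otimes>\<^sub>M count_space UNIV)"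
  assumes "integrable M (\<lambda>\<omega>. d_phi phi (C \<omega>) (Q \<omega>))"
    and "\<forall>k. integrable M (\<lambda>\<omega>. phi (C \<omega>) k * Q \<omega> $ k)"
    and "\<forall>k. integrable M (\<lambda>\<omega>. phi (cond_exp_vec M FBR Q \<omega>) k * Q \<omega> $ k)"
    and "integrable M (\<lambda>\<omega>. h (Q \<omega>))"
    and "integrable M (\<lambda>\<omega>. h (C \<omega>))"
    and "integrable M (\<lambda>\<omega>. h (cond_exp_vec M FBR Q \<omega>))"
    and "integrable M (\<lambda>\<omega>. h (cond_exp_vec M FB (cond_exp_vec M FBR Q) \<omega>))"
    and "integrable M (\<lambda>\<omega>. h (cond_exp_vec M FB C \<omega>))"
    and "integrable M (Var_cond M FB h (cond_exp_vec M FBR Q))"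
    and "integrable M (Var_cond M FBR h Q)"
    and "integrable M (Var_cond M FB h C)"
  shows "(\<integral>\<omega>. d_phi phi (C \<omega>) (Q \<omega>) \<partial>M)
           = (\<integral>\<omega>. Var_cond M FB h (cond_exp_vec M FBR Q) \<omega> \<partial>M)
             - (\<integral>\<omega>. Var_cond M FB h C \<omega> \<partial>M)
             + (\<integral>\<omega>. Var_cond M FBR h Q \<omega> \<partial>M)
         \<and> (proper_rule phi \<longrightarrow>
             (\<integral>\<omega>. d_phi phi (C \<omega>) (Q \<omega>) \<partial>M)
               \<ge> (\<integral>\<omega>. Var_cond M FB h (cond_exp_vec M FBR Q) \<omega> \<partial>M)
                  - (\<integral>\<omega>. Var_cond M FB h C \<omega> \<partial>M))"
  
proof -
  interpret p: prob_space M by fact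
  have S_meas: "S \<in> borel_measurable M" unfolding S_def using measurable_compose[OF assms(2) assms(5)] .
  define FS where "FS = vimage_algebra (space M) S borel"
  define FX where "FX = vimage_algebra (space M) X Mx"
  have subFS: "subalgebra M FS" unfolding FS_def by (rule sub_vimage[OF S_meas]) auto
  have subFX: "subalgebra M FX" unfolding FX_def by (rule sub_vimage[OF assms(2)]) auto
  define gg :: "nat \<Rightarrow> real^'k" where "gg n = (\<chi> i. (\<integral>w. S w $ i * indicator {w\<in>space M. bin (S w) = n} w \<partial>M)
            / measure M {w\<in>space M. bin (S w) = n})" for n
  have SB_eq: "SB = (\<lambda>\<omega>. gg (bin (S \<omega>)))" unfolding SB_def binned_def gg_def by (rule ext) simp
  have gg_meas: "gg \<in> measurable (count_space UNIV) borel" by simp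
  have S_FS: "S \<in> borel_measurable FS" unfolding FS_def by (rule measurable_vimage_algebra1) simp
  have SB_FS: "SB \<in> borel_measurable FS" unfolding SB_eq
    using measurable_compose[OF measurable_compose[OF S_FS assms(8)] gg_meas] .
  have SB_M: "SB \<in> borel_measurable M" using measurable_from_subalg[OF subFS SB_FS] .
  define pr where "pr = (\<lambda>\<omega>. (SB \<omega>, R (X \<omega>)))"
  have pr_M: "pr \<in> measurable M (borel \<Otimes>\<^sub>M count_space UNIV)" unfolding pr_def
    using measurable_Pair[OF SB_M measurable_compose[OF assms(2) assms(10)]] .
  have FBR_eq: "FBR = vimage_algebra (space M) pr (borel \<Otimes>\<^sub>M count_space UNIV)" unfolding FBR_def pr_def ..
  have subFB: "subalgebra M FB" unfolding FB_def by (rule sub_vimage[OF SB_M]) auto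
  have subFBR: "subalgebra M FBR" unfolding FBR_eq by (rule sub_vimage[OF pr_M]) auto
  have subFS_FB: "subalgebra FS FB" unfolding FB_def by (rule sub_vimage[OF SB_FS]) (use subFS in \<open>auto simp: subalgebra_def\<close>)
  have pr_FBR: "pr \<in> measurable FBR (borel \<Otimes>\<^sub>M count_space UNIV)" unfolding FBR_eq
    by (rule measurable_vimage_algebra1) (simp add: space_pair_measure)
  have SB_FBR: "SB \<in> borel_measurable FBR"
  proof -
    have "(\<lambda>\<omega>. fst (pr \<omega>)) \<in> borel_measurable FBR"
      using measurable_compose[OF pr_FBR measurable_fst] by simp
    then show ?thesis unfolding pr_def by simp
  qed
  have subFBR_FB: "subalgebra FBR FB" unfolding FB_def by (rule sub_vimage[OF SB_FBR]) (use subFBR in \<open>auto simp: subalgebra_def\<close>)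
  have Y_comp: "\<forall>i. (\<lambda>x. Y x $ i) \<in> borel_measurable M" using assms(3) vec_meas by blast
  have Y_simp: "AE x in M. Y x \<in> prob_simplex"
  proof (rule AE_I2)
    fix x assume "x \<in> space M"
    then obtain k where "Y x = axis k 1" using assms(4) by blast
    then show "Y x \<in> prob_simplex" using axis_simplex by simp
  qed
  have Q_eq: "Q = cond_exp_vec M FX Y" unfolding Q_def FX_def ..
  have Q_comp: "\<forall>i. (\<lambda>x. Q x $ i) \<in> borel_measurable M"
    using cev_meas_M[OF subFX] vec_meas unfolding Q_eq by blast
  have Q_simp: "AE x in M. Q x \<in> prob_simplex" unfolding Q_eq
    by (rule simplex_AE[OF assms(1) subFX Y_comp Y_simp])
  have Q_int: "\<forall>i. integrable M (\<lambda>x. Q x $ i)"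
    using simplex_int[OF assms(1) Q_comp Q_simp] by blast
  have C_eq: "C = cond_exp_vec M FS Q" unfolding C_def FS_def ..
  define G where "G = cond_exp_vec M FBR Q"
  have G_simp: "AE x in M. G x \<in> prob_simplex" unfolding G_def
    by (rule simplex_AE[OF assms(1) subFBR Q_comp Q_simp])
  have hs: "h p = - s_phi phi p p" for p unfolding h_def ..
  have sQQ_int: "integrable M (\<lambda>\<omega>. s_phi phi (Q \<omega>) (Q \<omega>))"
    using assms(21) unfolding hs by simp
  have sCQ_int: "integrable M (\<lambda>\<omega>. s_phi phi (C \<omega>) (Q \<omega>))"
    unfolding s_phi_def using assms(19) by (intro Bochner_Integration.integrable_sum) blast
  have sGQ_int: "integrable M (\<lambda>\<omega>. s_phi phi (G \<omega>) (Q \<omega>))"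
    unfolding s_phi_def G_def using assms(20) by (intro Bochner_Integration.integrable_sum) blast
  have E1: "(\<integral>\<omega>. d_phi phi (C \<omega>) (Q \<omega>) \<partial>M) = (\<integral>\<omega>. s_phi phi (C \<omega>) (Q \<omega>) \<partial>M) - (\<integral>\<omega>. s_phi phi (Q \<omega>) (Q \<omega>) \<partial>M)"
    unfolding d_phi_def using sCQ_int sQQ_int by (rule Bochner_Integration.integral_diff)
  have E2: "(\<integral>\<omega>. s_phi phi (C \<omega>) (Q \<omega>) \<partial>M) = (\<integral>\<omega>. s_phi phi (C \<omega>) (C \<omega>) \<partial>M)"
    unfolding C_eq using tower_score(2)[OF assms(1) subFS Q_comp assms(7)] assms(19) unfolding C_eq by blast
  have E2': "(\<integral>\<omega>. s_phi phi (G \<omega>) (Q \<omega>) \<partial>M) = (\<integral>\<omega>. s_phi phi (G \<omega>) (G \<omega>) \<partial>M)"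
    unfolding G_def using tower_score(2)[OF assms(1) subFBR Q_comp assms(7)] assms(20) by blast
  have hint: "(\<integral>\<omega>. h (V \<omega>) \<partial>M) = - (\<integral>\<omega>. s_phi phi (V \<omega>) (V \<omega>) \<partial>M)" for V :: "'a \<Rightarrow> real^'k"
    unfolding hs by simp
  have V1: "(\<integral>\<omega>. Var_cond M FB h G \<omega> \<partial>M) = (\<integral>\<omega>. h (G \<omega>) \<partial>M) - (\<integral>\<omega>. h (cond_exp_vec M FB G \<omega>) \<partial>M)"
    using var_int[OF assms(1) subFB] assms(23,24) unfolding G_def by blast
  have V2: "(\<integral>\<omega>. Var_cond M FB h C \<omega> \<partial>M) = (\<integral>\<omega>. h (C \<omega>) \<partial>M) - (\<integral>\<omega>. h (cond_exp_vec M FB C \<omega>) \<partial>M)"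
    using var_int[OF assms(1) subFB] assms(22,25) by blast
  have V3: "(\<integral>\<omega>. Var_cond M FBR h Q \<omega> \<partial>M) = (\<integral>\<omega>. h (Q \<omega>) \<partial>M) - (\<integral>\<omega>. h (G \<omega>) \<partial>M)"
    using var_int[OF assms(1) subFBR] assms(21,23) unfolding G_def by blast
  have AE1: "AE x in M. cond_exp_vec M FB G x = cond_exp_vec M FB Q x" unfolding G_def
    by (rule tower_vec[OF assms(1) subFBR subFBR_FB subFB Q_int])
  have AE2: "AE x in M. cond_exp_vec M FB C x = cond_exp_vec M FB Q x" unfolding C_eq
    by (rule tower_vec[OF assms(1) subFS subFS_FB subFB Q_int])
  have E4: "(\<integral>\<omega>. h (cond_exp_vec M FB G \<omega>) \<partial>M) = (\<integral>\<omega>. h (cond_exp_vec M FB C \<omega>) \<partial>M)"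
  proof (rule integral_cong_AE)
    show "(\<lambda>\<omega>. h (cond_exp_vec M FB G \<omega>)) \<in> borel_measurable M"
      using assms(24) unfolding G_def by (rule borel_measurable_integrable)
    show "(\<lambda>\<omega>. h (cond_exp_vec M FB C \<omega>)) \<in> borel_measurable M"
      using assms(25) by (rule borel_measurable_integrable)
    show "AE x in M. h (cond_exp_vec M FB G x) = h (cond_exp_vec M FB C x)"
      using AE1 AE2 by eventually_elim simp
  qed
  have part1: "(\<integral>\<omega>. d_phi phi (C \<omega>) (Q \<omega>) \<partial>M)
           = (\<integral>\<omega>. Var_cond M FB h (cond_exp_vec M FBR Q) \<omega> \<partial>M)
             - (\<integral>\<omega>. Var_cond M FB h C \<omega> \<partial>M)
             + (\<integral>\<omega>. Var_cond M FBR h Q \<omega> \<partial>M)"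
    unfolding G_def[symmetric] E1 V1 V2 V3 E4 E2 hint[of C] hint[of Q] by simp
  have res: "0 \<le> (\<integral>\<omega>. Var_cond M FBR h Q \<omega> \<partial>M)" if pr: "proper_rule phi"
  proof -
    have e1: "(\<integral>\<omega>. Var_cond M FBR h Q \<omega> \<partial>M) = (\<integral>\<omega>. s_phi phi (G \<omega>) (Q \<omega>) \<partial>M) - (\<integral>\<omega>. s_phi phi (Q \<omega>) (Q \<omega>) \<partial>M)"
      unfolding V3 E2' hint[of G] hint[of Q] by simp
    have e2: "(\<integral>\<omega>. d_phi phi (G \<omega>) (Q \<omega>) \<partial>M) = (\<integral>\<omega>. s_phi phi (G \<omega>) (Q \<omega>) \<partial>M) - (\<integral>\<omega>. s_phi phi (Q \<omega>) (Q \<omega>) \<partial>M)"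
      unfolding d_phi_def using sGQ_int sQQ_int by (rule Bochner_Integration.integral_diff)
    have ae: "AE x in M. 0 \<le> d_phi phi (G x) (Q x)"
      using G_simp Q_simp
    proof eventually_elim
      case (elim x)
      then show ?case using pr unfolding proper_rule_def by blast
    qed
    have e3: "0 \<le> (\<integral>\<omega>. d_phi phi (G \<omega>) (Q \<omega>) \<partial>M)"
      by (rule integral_nonneg_AE[OF ae])
    show ?thesis using e1 e2 e3 by linarith
  qed
  show ?thesis
  proof (intro conjI impI)
    show "(\<integral>\<omega>. d_phi phi (C \<omega>) (Q \<omega>) \<partial>M)
           = (\<integral>\<omega>. Var_cond M FB h (cond_exp_vec M FBR Q) \<omega> \<partial>M)
             - (\<integral>\<omega>. Var_cond M FB h C \<omega> \<partial>M)
             + (\<integral>\<omega>. Var_cond M FBR h Q \<omega> \<partial>M)" by (rule part1)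
    assume "proper_rule phi"
    from res[OF this] part1 show "(\<integral>\<omega>. d_phi phi (C \<omega>) (Q \<omega>) \<partial>M)
               \<ge> (\<integral>\<omega>. Var_cond M FB h (cond_exp_vec M FBR Q) \<omega> \<partial>M)
                  - (\<integral>\<omega>. Var_cond M FB h C \<omega> \<partial>M)" by linarith
  qed
qed

end
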